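(* Let $p,q\in\mathcal{S}$, let $k^*=\arg\max_k q_k$, let $m\ge1$ and $\delta\in[0,\log(1/p_{k^*}))$. Consider the problem of minimizing $H(\Phi\|q^m)$ over probability distributions $\Phi$ on $[K]^m$ subject to $D_{\mathrm{KL}}(\Phi\|p^m)\le m\delta$. Its unique solution is the product distribution $\phi_\delta^m$, i.e. $\Phi(y^m)=\prod_{i=1}^m\phi_\delta(y_i)$, where $\phi_\delta=T(q,p,\alpha(\delta))$.
   Context: Fix $K\ge2$ and $\zeta\in(0,1/K)$. $\mathcal{S}$ is the set of probability vectors $p=(p_1,\dots,p_K)$ on $[K]=\{1,\dots,K\}$ with $p_k>\zeta$ for all $k$ and $p_k\neq p_{k'}$ for all $k\ne k'$. For $p\in\mathcal{S}$, $p^m$ denotes the product (memoryless) distribution $p^m(y^m)=\prod_{i=1}^m p_{y_i}$ on $[K]^m$. Cross entropy $H(a\|b)=\sum a\log(1/b)$, KL divergence $D_{\mathrm{KL}}(a\|b)=\sum a\log(a/b)$, natural logarithms. Mismatched tilt: for $\alpha\in\mathbb{R}$, $T(q,p,\alpha)_k=\frac{p_kq_k^\alpha}{\sum_{j}p_jq_j^\alpha}$. For $\delta\in[0,\log(1/p_{k^*}))$, $\alpha(\delta)$ denotes the unique $\alpha\ge0$ with $D_{\mathrm{KL}}(T(q,p,\alpha)\|p)=\delta$, and $\phi_\delta=T(q,p,\alpha(\delta))$. *)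

theory Defs
  imports "HOL-Analysis.Analysis" "HOL-Library.FuncSet"
begin

text \<open>Alphabet [K] = {1..K}; distributions on [K] are functions nat => real (only values on {1..K} matter).
  Sequences y^m in [K]^m are functions in {0..<m} ->E {1..K}.\<close>

definition inS :: "nat \<Rightarrow> real \<Rightarrow> (nat \<Rightarrow> real) \<Rightarrow> bool" where
  "inS K \<zeta> p \<longleftrightarrow> (\<forall>k\<in>{1..K}. p k > \<zeta>) \<and> (\<Sum>k=1..K. p k) = 1 \<and>
     (\<forall>k\<in>{1..K}. \<forall>k'\<in>{1..K}. k \<noteq> k' \<longrightarrow> p k \<noteq> p k')"

definition seqs :: "nat \<Rightarrow> nat \<Rightarrow> (nat \<Rightarrow> nat) set" where
  "seqs K m = {0..<m} \<rightarrow>\<^sub>E {1..K}"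

definition prod_dist :: "nat \<Rightarrow> (nat \<Rightarrow> real) \<Rightarrow> (nat \<Rightarrow> nat) \<Rightarrow> real" where
  "prod_dist m p y = (\<Prod>i<m. p (y i))"

definition is_pmf_on :: "'a set \<Rightarrow> ('a \<Rightarrow> real) \<Rightarrow> bool" where
  "is_pmf_on A \<Phi> \<longleftrightarrow> (\<forall>x\<in>A. \<Phi> x \<ge> 0) \<and> (\<Sum>x\<in>A. \<Phi> x) = 1"

definition cross_ent :: "'a set \<Rightarrow> ('a \<Rightarrow> real) \<Rightarrow> ('a \<Rightarrow> real) \<Rightarrow> real" where
  "cross_ent A a b = (\<Sum>x\<in>A. a x * ln (1 / b x))"

definition kl_div :: "'a set \<Rightarrow> ('a \<Rightarrow> real) \<Rightarrow> ('a \<Rightarrow> real) \<Rightarrow> real" where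
  "kl_div A a b = (\<Sum>x\<in>A. a x * ln (a x / b x))"

definition tilt :: "nat \<Rightarrow> (nat \<Rightarrow> real) \<Rightarrow> (nat \<Rightarrow> real) \<Rightarrow> real \<Rightarrow> nat \<Rightarrow> real" where
  "tilt K q p \<alpha> k = p k * q k powr \<alpha> / (\<Sum>j=1..K. p j * q j powr \<alpha>)"

definition alpha_of :: "nat \<Rightarrow> (nat \<Rightarrow> real) \<Rightarrow> (nat \<Rightarrow> real) \<Rightarrow> real \<Rightarrow> real" where
  "alpha_of K q p \<delta> = (THE \<alpha>. \<alpha> \<ge> 0 \<and> kl_div {1..K} (tilt K q p \<alpha>) p = \<delta>)"

definition phi :: "nat \<Rightarrow> (nat \<Rightarrow> real) \<Rightarrow> (nat \<Rightarrow> real) \<Rightarrow> real \<Rightarrow> nat \<Rightarrow> real" where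
  "phi K q p \<delta> = tilt K q p (alpha_of K q p \<delta>)"

end

theory Submission imports Defs "HOL-Real_Asymp.Real_Asymp" begin


lemma term_ge:
  fixes a b :: real assumes "0 \<le> a" "0 < b"
  shows "a * ln (a / b) \<ge> a - b" and "a * ln (a / b) = a - b \<Longrightarrow> a = b"
proof -
  show "a * ln (a / b) \<ge> a - b"
  proof (cases "a = 0")
    case True thus ?thesis using assms by simp
  next
    case False
    hence ap: "a > 0" using assms by simp
    have "ln (b / a) \<le> b / a - 1" using ln_le_minus_one[of "b/a"] ap assms by simp
    hence "a * ln (b/a) \<le> a * (b/a - 1)" using ap by (simp add: mult_left_mono)
    also have "a * (b/a - 1) = b - a" using ap by (simp add: right_diff_distrib)
    finally have "a * ln (b/a) \<le> b - a" .
    moreover have "ln (a / b) = - ln (b / a)" using ap assms by (simp add: ln_div)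
    ultimately show ?thesis by simp
  qed
  assume eq: "a * ln (a / b) = a - b"
  show "a = b"
  proof (cases "a = 0")
    case True thus ?thesis using assms eq by simp
  next
    case False
    hence ap: "a > 0" using assms by simp
    have "ln (a / b) = - ln (b / a)" using ap assms by (simp add: ln_div)
    hence "a * ln (b/a) = b - a" using eq by simp
    hence "ln (b/a) = (b - a) / a" using ap by (simp add: eq_divide_eq mult.commute)
    hence "ln (b/a) = b/a - 1" using ap by (simp add: diff_divide_distrib)
    hence "b / a = 1" using ln_eq_minus_one[of "b/a"] ap assms by simp
    thus ?thesis using ap by simp
  qed
qed

lemma gibbs:
  fixes A :: "'a set" and a b :: "'a \<Rightarrow> real"
  assumes "finite A" "\<forall>x\<in>A. a x \<ge> 0" "\<forall>x\<in>A. b x > 0" "sum a A = 1" "sum b A = 1"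
  shows "kl_div A a b \<ge> 0" and "kl_div A a b \<le> 0 \<Longrightarrow> \<forall>x\<in>A. a x = b x"
proof -
  have ge: "\<And>x. x \<in> A \<Longrightarrow> a x * ln (a x / b x) - (a x - b x) \<ge> 0"
  proof -
    fix x assume "x \<in> A"
    hence "a x \<ge> 0" "b x > 0" using assms(2,3) by auto
    from term_ge(1)[OF this] show "a x * ln (a x / b x) - (a x - b x) \<ge> 0" by simp
  qed
  have s: "kl_div A a b = (\<Sum>x\<in>A. a x * ln (a x / b x) - (a x - b x))"
    unfolding kl_div_def sum_subtractf using assms(4,5) by simp
  show "kl_div A a b \<ge> 0" unfolding s using ge by (simp add: sum_nonneg)
  assume "kl_div A a b \<le> 0"
  moreover have "(\<Sum>x\<in>A. a x * ln (a x / b x) - (a x - b x)) \<ge> 0" using ge by (simp add: sum_nonneg)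
  ultimately have "(\<Sum>x\<in>A. a x * ln (a x / b x) - (a x - b x)) = 0" using s by linarith
  hence "\<forall>x\<in>A. a x * ln (a x / b x) - (a x - b x) = 0"
    using sum_nonneg_eq_0_iff[OF assms(1), of "\<lambda>x. a x * ln (a x / b x) - (a x - b x)"] ge by blast
  show "\<forall>x\<in>A. a x = b x"
  proof
    fix x assume x: "x \<in> A"
    hence "a x \<ge> 0" "b x > 0" using assms(2,3) by auto
    have "a x * ln (a x / b x) - (a x - b x) = 0" using \<open>\<forall>x\<in>A. _ = 0\<close> x by blast
    hence "a x * ln (a x / b x) = a x - b x" by linarith
    from term_ge(2)[OF \<open>a x \<ge> 0\<close> \<open>b x > 0\<close> this] show "a x = b x" .
  qed
qed

lemma seqs_finite: "finite (seqs K m)"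
  unfolding seqs_def by (auto intro: finite_PiE)

lemma prod_dist_sum:
  fixes h :: "nat \<Rightarrow> nat \<Rightarrow> real"
  shows "(\<Sum>y\<in>seqs K m. (\<Prod>i<m. h i (y i))) = (\<Prod>i<m. \<Sum>k=1..K. h i k)"
  unfolding seqs_def using prod_sum_PiE[of "{0..<m}" "\<lambda>_. {1..K}" h]
  by (simp add: atLeast0LessThan)

lemma prod_dist_total:
  fixes \<phi> :: "nat \<Rightarrow> real"
  shows "(\<Sum>y\<in>seqs K m. prod_dist m \<phi> y) = (\<Sum>k=1..K. \<phi> k) ^ m"
  unfolding prod_dist_def using prod_dist_sum[where h="\<lambda>_. \<phi>"] by simp

lemma prod_dist_lin:
  fixes \<phi> f :: "nat \<Rightarrow> real"
  assumes "(\<Sum>k=1..K. \<phi> k) = 1"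
  shows "(\<Sum>y\<in>seqs K m. prod_dist m \<phi> y * (\<Sum>i<m. f (y i))) = real m * (\<Sum>k=1..K. \<phi> k * f k)"
proof -
  have "(\<Sum>y\<in>seqs K m. prod_dist m \<phi> y * (\<Sum>i<m. f (y i)))
      = (\<Sum>i<m. \<Sum>y\<in>seqs K m. (\<Prod>j<m. (if j = i then (\<lambda>k. \<phi> k * f k) else \<phi>) (y j)))"
  proof -
    have E: "\<And>y i. i < m \<Longrightarrow> prod_dist m \<phi> y * f (y i) = (\<Prod>j<m. (if j = i then (\<lambda>k. \<phi> k * f k) else \<phi>) (y j))"
    proof -
      fix y i assume i: "i < m"
      have "(\<Prod>j<m. (if j = i then (\<lambda>k. \<phi> k * f k) else \<phi>) (y j))
          = (\<Prod>j<m. \<phi> (y j) * (if j = i then f (y j) else 1))"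
        by (rule prod.cong) auto
      also have "\<dots> = prod_dist m \<phi> y * (\<Prod>j<m. (if j = i then f (y j) else 1))"
        by (simp add: prod.distrib prod_dist_def)
      also have "(\<Prod>j<m. (if j = i then f (y j) else 1)) = f (y i)"
        using i by (simp add: prod.delta)
      finally show "prod_dist m \<phi> y * f (y i) = (\<Prod>j<m. (if j = i then (\<lambda>k. \<phi> k * f k) else \<phi>) (y j))" by simp
    qed
    have "(\<Sum>y\<in>seqs K m. prod_dist m \<phi> y * (\<Sum>i<m. f (y i))) = (\<Sum>y\<in>seqs K m. \<Sum>i<m. (\<Prod>j<m. (if j = i then (\<lambda>k. \<phi> k * f k) else \<phi>) (y j)))"
      unfolding sum_distrib_left by (intro sum.cong refl E) simp
    also have "\<dots> = (\<Sum>i<m. \<Sum>y\<in>seqs K m. (\<Prod>j<m. (if j = i then (\<lambda>k. \<phi> k * f k) else \<phi>) (y j)))"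
      by (rule sum.swap)
    finally show ?thesis .
  qed
  also have "\<dots> = (\<Sum>i<m. \<Prod>j<m. \<Sum>k=1..K. (if j = i then (\<lambda>k. \<phi> k * f k) else \<phi>) k)"
    by (subst prod_dist_sum) simp
  also have "\<dots> = (\<Sum>i<m. (\<Sum>k=1..K. \<phi> k * f k))"
  proof (rule sum.cong)
    fix i assume i: "i \<in> {..<m}"
    have "(\<Prod>j<m. \<Sum>k=1..K. (if j = i then (\<lambda>k. \<phi> k * f k) else \<phi>) k)
        = (\<Prod>j<m. if j = i then (\<Sum>k=1..K. \<phi> k * f k) else 1)"
      by (rule prod.cong) (use assms in auto)
    also have "\<dots> = (\<Sum>k=1..K. \<phi> k * f k)" using i by (simp add: prod.delta)
    finally show "(\<Prod>j<m. \<Sum>k=1..K. (if j = i then (\<lambda>k. \<phi> k * f k) else \<phi>) k) = (\<Sum>k=1..K. \<phi> k * f k)" .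
  qed simp
  finally show ?thesis by simp
qed



definition Zt :: "nat \<Rightarrow> (nat \<Rightarrow> real) \<Rightarrow> (nat \<Rightarrow> real) \<Rightarrow> real \<Rightarrow> real" where
  "Zt K q p \<alpha> = (\<Sum>j=1..K. p j * q j powr \<alpha>)"

definition mut :: "nat \<Rightarrow> (nat \<Rightarrow> real) \<Rightarrow> (nat \<Rightarrow> real) \<Rightarrow> real \<Rightarrow> real" where
  "mut K q p \<alpha> = (\<Sum>k=1..K. tilt K q p \<alpha> k * ln (q k))"

lemma tilt_props:
  assumes pp: "\<forall>k\<in>{1..K}. p k > 0" and qp: "\<forall>k\<in>{1..K}. q k > 0" and K: "K \<ge> 1"
  shows "Zt K q p \<alpha> > 0" "\<forall>k\<in>{1..K}. tilt K q p \<alpha> k > 0"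
    "(\<Sum>k=1..K. tilt K q p \<alpha> k) = 1"
    "\<forall>k\<in>{1..K}. ln (tilt K q p \<alpha> k / p k) = \<alpha> * ln (q k) - ln (Zt K q p \<alpha>)"
proof -
  have t: "\<And>k. tilt K q p \<alpha> k = p k * q k powr \<alpha> / Zt K q p \<alpha>"
    unfolding tilt_def Zt_def by simp
  show Z: "Zt K q p \<alpha> > 0" unfolding Zt_def
  proof (rule sum_pos)
    fix i assume i: "i \<in> {1..K}"
    hence "p i > 0" "q i > 0" using pp qp by blast+
    thus "p i * q i powr \<alpha> > 0" by simp
  qed (use K in auto)
  show "\<forall>k\<in>{1..K}. tilt K q p \<alpha> k > 0" unfolding t
  proof
    fix i assume i: "i \<in> {1..K}"
    hence "p i > 0" "q i > 0" using pp qp by blast+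
    thus "p i * q i powr \<alpha> / Zt K q p \<alpha> > 0" using Z by simp
  qed
  show "(\<Sum>k=1..K. tilt K q p \<alpha> k) = 1" unfolding t using Z
    by (simp add: sum_divide_distrib[symmetric] Zt_def)
  show "\<forall>k\<in>{1..K}. ln (tilt K q p \<alpha> k / p k) = \<alpha> * ln (q k) - ln (Zt K q p \<alpha>)"
  proof
    fix k assume k: "k \<in> {1..K}"
    have "p k > 0" using pp k by blast
    hence "tilt K q p \<alpha> k / p k = q k powr \<alpha> / Zt K q p \<alpha>" unfolding t by simp
    moreover have "ln (q k powr \<alpha> / Zt K q p \<alpha>) = ln (q k powr \<alpha>) - ln (Zt K q p \<alpha>)"
    proof -
      have "q k > 0" using qp k by blast
      thus ?thesis using Z by (simp add: ln_divide_pos)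
    qed
    ultimately show "ln (tilt K q p \<alpha> k / p k) = \<alpha> * ln (q k) - ln (Zt K q p \<alpha>)" by simp
  qed
qed

lemma D_formula:
  assumes pp: "\<forall>k\<in>{1..K}. p k > 0" and qp: "\<forall>k\<in>{1..K}. q k > 0" and K: "K \<ge> 1"
  shows "kl_div {1..K} (tilt K q p \<alpha>) p = \<alpha> * mut K q p \<alpha> - ln (Zt K q p \<alpha>)"
proof -
  note tp = tilt_props[OF pp qp K, of \<alpha>]
  have "kl_div {1..K} (tilt K q p \<alpha>) p = (\<Sum>k=1..K. tilt K q p \<alpha> k * (\<alpha> * ln (q k) - ln (Zt K q p \<alpha>)))"
    unfolding kl_div_def using tp(4) by (intro sum.cong) auto
  also have "\<dots> = (\<Sum>k=1..K. \<alpha> * (tilt K q p \<alpha> k * ln (q k)) - ln (Zt K q p \<alpha>) * tilt K q p \<alpha> k)"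
    by (rule sum.cong) (simp_all add: algebra_simps)
  also have "\<dots> = \<alpha> * (\<Sum>k=1..K. tilt K q p \<alpha> k * ln (q k)) - ln (Zt K q p \<alpha>) * (\<Sum>k=1..K. tilt K q p \<alpha> k)"
    by (simp add: sum_subtractf sum_distrib_left)
  finally show ?thesis using tp(3) unfolding mut_def by simp
qed

lemma kl_tilts:
  assumes pp: "\<forall>k\<in>{1..K}. p k > 0" and qp: "\<forall>k\<in>{1..K}. q k > 0" and K: "K \<ge> 1"
  shows "kl_div {1..K} (tilt K q p \<alpha>) (tilt K q p \<beta>)
       = (\<alpha> - \<beta>) * mut K q p \<alpha> - ln (Zt K q p \<alpha>) + ln (Zt K q p \<beta>)"
proof -
  note ta = tilt_props[OF pp qp K, of \<alpha>] and tb = tilt_props[OF pp qp K, of \<beta>]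
  have e: "\<And>k. k \<in> {1..K} \<Longrightarrow> ln (tilt K q p \<alpha> k / tilt K q p \<beta> k)
      = (\<alpha> - \<beta>) * ln (q k) - ln (Zt K q p \<alpha>) + ln (Zt K q p \<beta>)"
  proof -
    fix k assume k: "k \<in> {1..K}"
    have pk: "p k > 0" using pp k by blast
    have "tilt K q p \<alpha> k / tilt K q p \<beta> k = (tilt K q p \<alpha> k / p k) / (tilt K q p \<beta> k / p k)"
      using pk by simp
    hence "ln (tilt K q p \<alpha> k / tilt K q p \<beta> k) = ln (tilt K q p \<alpha> k / p k) - ln (tilt K q p \<beta> k / p k)"
    proof -
      have "tilt K q p \<alpha> k > 0" "tilt K q p \<beta> k > 0" using ta(2) tb(2) k by blast+
      thus ?thesis using pk by (simp add: ln_div)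
    qed
    thus "ln (tilt K q p \<alpha> k / tilt K q p \<beta> k)
      = (\<alpha> - \<beta>) * ln (q k) - ln (Zt K q p \<alpha>) + ln (Zt K q p \<beta>)"
      using ta(4) tb(4) k by (simp add: left_diff_distrib)
  qed
  have "kl_div {1..K} (tilt K q p \<alpha>) (tilt K q p \<beta>)
     = (\<Sum>k=1..K. tilt K q p \<alpha> k * ((\<alpha> - \<beta>) * ln (q k) + (ln (Zt K q p \<beta>) - ln (Zt K q p \<alpha>))))"
    unfolding kl_div_def using e by (intro sum.cong) auto
  also have "\<dots> = (\<Sum>k=1..K. (\<alpha> - \<beta>) * (tilt K q p \<alpha> k * ln (q k)) + (ln (Zt K q p \<beta>) - ln (Zt K q p \<alpha>)) * tilt K q p \<alpha> k)"
    by (rule sum.cong) (simp_all add: algebra_simps)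
  also have "\<dots> = (\<alpha> - \<beta>) * (\<Sum>k=1..K. tilt K q p \<alpha> k * ln (q k)) + (ln (Zt K q p \<beta>) - ln (Zt K q p \<alpha>)) * (\<Sum>k=1..K. tilt K q p \<alpha> k)"
    by (simp add: sum.distrib sum_distrib_left)
  finally show ?thesis using ta(3) unfolding mut_def by simp
qed

lemma tilts_differ:
  assumes pp: "\<forall>k\<in>{1..K}. p k > 0" and qp: "\<forall>k\<in>{1..K}. q k > 0" and K: "K \<ge> 2"
    and qd: "q 1 \<noteq> q 2" and ab: "\<alpha> \<noteq> \<beta>"
  shows "\<not> (\<forall>k\<in>{1..K}. tilt K q p \<alpha> k = tilt K q p \<beta> k)"
proof
  assume eq: "\<forall>k\<in>{1..K}. tilt K q p \<alpha> k = tilt K q p \<beta> k"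
  have K1: "K \<ge> 1" using K by simp
  note ta = tilt_props[OF pp qp K1, of \<alpha>] and tb = tilt_props[OF pp qp K1, of \<beta>]
  have h: "\<And>k. k \<in> {1..K} \<Longrightarrow> (\<alpha> - \<beta>) * ln (q k) = ln (Zt K q p \<alpha>) - ln (Zt K q p \<beta>)"
  proof -
    fix k assume k: "k \<in> {1..K}"
    have "\<alpha> * ln (q k) - ln (Zt K q p \<alpha>) = \<beta> * ln (q k) - ln (Zt K q p \<beta>)"
      using ta(4) tb(4) eq k by metis
    thus "(\<alpha> - \<beta>) * ln (q k) = ln (Zt K q p \<alpha>) - ln (Zt K q p \<beta>)" by (simp add: left_diff_distrib)
  qed
  have "(\<alpha> - \<beta>) * ln (q 1) = (\<alpha> - \<beta>) * ln (q 2)" using h[of 1] h[of 2] K by simp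
  hence "ln (q 1) = ln (q 2)" using ab by simp
  hence "q 1 = q 2" using qp K by simp
  thus False using qd by simp
qed

lemma D_strict_mono:
  assumes pp: "\<forall>k\<in>{1..K}. p k > 0" and qp: "\<forall>k\<in>{1..K}. q k > 0" and K: "K \<ge> 2"
    and qd: "q 1 \<noteq> q 2" and ab: "0 \<le> \<alpha>" "\<alpha> < \<beta>"
  shows "kl_div {1..K} (tilt K q p \<alpha>) p < kl_div {1..K} (tilt K q p \<beta>) p"
proof -
  have K1: "K \<ge> 1" using K by simp
  note ta = tilt_props[OF pp qp K1, of \<alpha>] and tb = tilt_props[OF pp qp K1, of \<beta>]
  have g1: "kl_div {1..K} (tilt K q p \<alpha>) (tilt K q p \<beta>) \<ge> 0"
    by (rule gibbs(1)) (use ta tb in \<open>auto simp: less_imp_le\<close>)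
  have g2: "kl_div {1..K} (tilt K q p \<beta>) (tilt K q p \<alpha>) > 0"
  proof -
    have "kl_div {1..K} (tilt K q p \<beta>) (tilt K q p \<alpha>) \<ge> 0"
      by (rule gibbs(1)) (use ta tb in \<open>auto simp: less_imp_le\<close>)
    moreover have "\<not> kl_div {1..K} (tilt K q p \<beta>) (tilt K q p \<alpha>) \<le> 0"
    proof
      assume "kl_div {1..K} (tilt K q p \<beta>) (tilt K q p \<alpha>) \<le> 0"
      hence "\<forall>k\<in>{1..K}. tilt K q p \<beta> k = tilt K q p \<alpha> k"
        by (rule gibbs(2)[rotated -1]) (use ta tb in \<open>auto simp: less_imp_le\<close>)
      thus False using tilts_differ[OF pp qp K qd, of \<alpha> \<beta>] ab by auto
    qed
    ultimately show ?thesis by linarith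
  qed
  define ma mb za zb where "ma = mut K q p \<alpha>" "mb = mut K q p \<beta>" "za = ln (Zt K q p \<alpha>)" "zb = ln (Zt K q p \<beta>)"
  have i1: "(\<alpha> - \<beta>) * ma - za + zb \<ge> 0" using g1 kl_tilts[OF pp qp K1, of \<alpha> \<beta>] ma_mb_za_zb_def by simp
  have i2: "(\<beta> - \<alpha>) * mb - zb + za > 0" using g2 kl_tilts[OF pp qp K1, of \<beta> \<alpha>] ma_mb_za_zb_def by simp
  have "(\<beta> - \<alpha>) * (mb - ma) > 0" using i1 i2 by (simp add: algebra_simps)
  hence "mb - ma > 0" using ab by (simp add: zero_less_mult_iff)
  hence "\<alpha> * (mb - ma) \<ge> 0" using ab by simp
  hence "\<beta> * mb - zb - (\<alpha> * ma - za) > 0" using i2 by (simp add: algebra_simps)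
  thus ?thesis using D_formula[OF pp qp K1, of \<alpha>] D_formula[OF pp qp K1, of \<beta>] ma_mb_za_zb_def by simp
qed



lemma xlnx: "((\<lambda>x::real. x * ln x) \<longlongrightarrow> 0) (at_right 0)" by real_asymp

lemma powr_lt1_lim:
  fixes r :: real assumes "0 < r" "r < 1"
  shows "((\<lambda>a. r powr a) \<longlongrightarrow> 0) at_top"
proof -
  have "ln r < 0" using assms by simp
  have "filterlim (\<lambda>a. ln r * a) at_bot at_top"
    by (rule filterlim_tendsto_neg_mult_at_bot[OF tendsto_const \<open>ln r < 0\<close> filterlim_ident])
  hence "filterlim (\<lambda>a. exp (ln r * a)) (nhds 0) at_top"
    by (rule filterlim_compose[OF exp_at_bot])
  moreover have "\<And>a. r powr a = exp (ln r * a)" using assms by (simp add: powr_def mult.commute)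
  ultimately show ?thesis by simp
qed

lemma D_cont:
  assumes pp: "\<forall>k\<in>{1..K}. p k > 0" and qp: "\<forall>k\<in>{1..K}. q k > 0" and K: "K \<ge> 1"
  shows "continuous_on UNIV (\<lambda>\<alpha>. kl_div {1..K} (tilt K q p \<alpha>) p)"
proof -
  have Zp: "\<And>\<alpha>. (\<Sum>j=1..K. p j * q j powr \<alpha>) > 0"
    using tilt_props(1)[OF pp qp K] unfolding Zt_def by blast
  have qp': "\<And>k. k \<in> {1..K} \<Longrightarrow> q k \<noteq> 0" using qp by force
  have e: "(\<lambda>\<alpha>. kl_div {1..K} (tilt K q p \<alpha>) p) = (\<lambda>\<alpha>. \<alpha> * (\<Sum>k=1..K. p k * q k powr \<alpha> / (\<Sum>j=1..K. p j * q j powr \<alpha>) * ln (q k)) - ln (\<Sum>j=1..K. p j * q j powr \<alpha>))"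
    using D_formula[OF pp qp K] unfolding mut_def tilt_def Zt_def by presburger
  have c: "continuous_on UNIV (\<lambda>\<alpha>. \<alpha> * (\<Sum>k=1..K. p k * q k powr \<alpha> / (\<Sum>j=1..K. p j * q j powr \<alpha>) * ln (q k)) - ln (\<Sum>j=1..K. p j * q j powr \<alpha>))"
  proof (intro continuous_intros ballI)
    fix x :: real show "(\<Sum>j=1..K. p j * q j powr x) \<noteq> 0" using Zp[of x] by simp
  next
    fix x :: real show "(\<Sum>j=1..K. p j * q j powr x) \<noteq> 0" using Zp[of x] by simp
  qed (use qp' in auto)
  show ?thesis unfolding e by (rule c)
qed

lemma D_lim:
  assumes pp: "\<forall>k\<in>{1..K}. p k > 0" and qp: "\<forall>k\<in>{1..K}. q k > 0" and K: "K \<ge> 1"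
    and ks: "kstar \<in> {1..K}" and qmax: "\<forall>k\<in>{1..K}. k \<noteq> kstar \<longrightarrow> q k < q kstar"
  shows "((\<lambda>\<alpha>. kl_div {1..K} (tilt K q p \<alpha>) p) \<longlongrightarrow> ln (1 / p kstar)) at_top"
proof -
  define qs where "qs = q kstar"
  define ps where "ps = p kstar"
  define r where "r k = q k / qs" for k
  define W where "W \<alpha> = (\<Sum>j=1..K. p j * r j powr \<alpha>)" for \<alpha>
  define c where "c k = (if k = kstar then 1 else (0::real))" for k
  have qsp: "qs > 0" using qp ks qs_def by blast
  have psp: "ps > 0" using pp ks ps_def by blast
  have rp: "\<And>k. k \<in> {1..K} \<Longrightarrow> r k > 0" using qp qsp unfolding r_def by force
  have limr: "\<And>k. k \<in> {1..K} \<Longrightarrow> ((\<lambda>a. r k powr a) \<longlongrightarrow> c k) at_top"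
  proof -
    fix k assume k: "k \<in> {1..K}"
    show "((\<lambda>a. r k powr a) \<longlongrightarrow> c k) at_top"
    proof (cases "k = kstar")
      case True
      hence "\<And>a. r k powr a = 1" using qsp unfolding r_def qs_def by simp
      thus ?thesis using True c_def by simp
    next
      case False
      hence "q k < qs" using qmax k qs_def by blast
      hence "r k < 1" using qsp unfolding r_def by simp
      thus ?thesis using powr_lt1_lim[OF rp[OF k]] False c_def by simp
    qed
  qed
  have limW: "(W \<longlongrightarrow> ps) at_top"
  proof -
    have "(W \<longlongrightarrow> (\<Sum>j=1..K. p j * c j)) at_top" unfolding W_def
      by (intro tendsto_sum tendsto_mult tendsto_const limr)
    moreover have "(\<Sum>j=1..K. p j * c j) = ps" unfolding c_def ps_def using ks
      by (simp add: if_distrib cong: if_cong)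
    ultimately show ?thesis by simp
  qed
  have Wp: "\<And>\<alpha>. W \<alpha> > 0" unfolding W_def
  proof (rule sum_pos)
    fix \<alpha> i assume i: "i \<in> {1..K}"
    hence "p i > 0" using pp by blast
    thus "p i * r i powr \<alpha> > 0" using rp[OF i] by simp
  qed (use K in auto)
  have teq: "\<And>\<alpha> k. tilt K q p \<alpha> k = p k * r k powr \<alpha> / W \<alpha>"
  proof -
    fix \<alpha> k
    have qr: "\<And>j. j \<in> {1..K} \<Longrightarrow> q j powr \<alpha> = qs powr \<alpha> * r j powr \<alpha>"
    proof -
      fix j assume j: "j \<in> {1..K}"
      have "q j = qs * r j" using qsp unfolding r_def by simp
      thus "q j powr \<alpha> = qs powr \<alpha> * r j powr \<alpha>" using qsp rp[OF j] by (simp add: powr_mult)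
    qed
    have "(\<Sum>j=1..K. p j * q j powr \<alpha>) = (\<Sum>j=1..K. qs powr \<alpha> * (p j * r j powr \<alpha>))"
      by (rule sum.cong) (simp_all add: qr)
    also have "\<dots> = qs powr \<alpha> * W \<alpha>" unfolding W_def by (simp add: sum_distrib_left)
    finally have den: "(\<Sum>j=1..K. p j * q j powr \<alpha>) = qs powr \<alpha> * W \<alpha>" .
    have "q k powr \<alpha> = qs powr \<alpha> * (q k / qs) powr \<alpha>"
      using qsp by (simp add: powr_divide)
    hence "tilt K q p \<alpha> k = p k * (qs powr \<alpha> * r k powr \<alpha>) / (qs powr \<alpha> * W \<alpha>)"
      unfolding tilt_def den r_def by simp
    also have "\<dots> = p k * r k powr \<alpha> / W \<alpha>" using qsp by simp
    finally show "tilt K q p \<alpha> k = p k * r k powr \<alpha> / W \<alpha>" .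
  qed
  have limT: "\<And>k. k \<in> {1..K} \<Longrightarrow> ((\<lambda>\<alpha>. tilt K q p \<alpha> k) \<longlongrightarrow> p k * c k / ps) at_top"
    unfolding teq using psp by (intro tendsto_intros limr limW) auto
  have tp: "\<And>\<alpha> k. k \<in> {1..K} \<Longrightarrow> tilt K q p \<alpha> k > 0"
    using tilt_props(2)[OF pp qp K] by blast
  have limterm: "\<And>k. k \<in> {1..K} \<Longrightarrow> ((\<lambda>\<alpha>. tilt K q p \<alpha> k * ln (tilt K q p \<alpha> k / p k))
        \<longlongrightarrow> (if k = kstar then ln (1 / ps) else 0)) at_top"
  proof -
    fix k assume k: "k \<in> {1..K}"
    have pk: "p k > 0" using pp k by blast
    show "((\<lambda>\<alpha>. tilt K q p \<alpha> k * ln (tilt K q p \<alpha> k / p k))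
        \<longlongrightarrow> (if k = kstar then ln (1 / ps) else 0)) at_top"
    proof (cases "k = kstar")
      case True
      have l1: "((\<lambda>\<alpha>. tilt K q p \<alpha> k) \<longlongrightarrow> 1) at_top"
        using limT[OF k] True psp c_def ps_def by simp
      have "((\<lambda>\<alpha>. tilt K q p \<alpha> k * ln (tilt K q p \<alpha> k / p k)) \<longlongrightarrow> 1 * ln (1 / p k)) at_top"
        using pk by (intro tendsto_intros l1) auto
      thus ?thesis using True ps_def by simp
    next
      case False
      have l0: "((\<lambda>\<alpha>. tilt K q p \<alpha> k) \<longlongrightarrow> 0) at_top"
        using limT[OF k] False c_def by simp
      have fl: "filterlim (\<lambda>\<alpha>. tilt K q p \<alpha> k) (at_right 0) at_top"
        by (rule tendsto_imp_filterlim_at_right[OF l0]) (use tp[OF k] in auto)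
      have a: "((\<lambda>\<alpha>. tilt K q p \<alpha> k * ln (tilt K q p \<alpha> k)) \<longlongrightarrow> 0) at_top"
        using filterlim_compose[OF xlnx fl] by simp
      have b: "((\<lambda>\<alpha>. tilt K q p \<alpha> k * ln (tilt K q p \<alpha> k) - tilt K q p \<alpha> k * ln (p k)) \<longlongrightarrow> 0 - 0 * ln (p k)) at_top"
        by (intro tendsto_intros a l0)
      have eq: "\<And>\<alpha>. tilt K q p \<alpha> k * ln (tilt K q p \<alpha> k / p k) = tilt K q p \<alpha> k * ln (tilt K q p \<alpha> k) - tilt K q p \<alpha> k * ln (p k)"
        using tp[OF k] pk by (simp add: ln_divide_pos right_diff_distrib)
      show ?thesis using b False unfolding eq by simp
    qed
  qed
  have "((\<lambda>\<alpha>. \<Sum>k=1..K. tilt K q p \<alpha> k * ln (tilt K q p \<alpha> k / p k))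
        \<longlongrightarrow> (\<Sum>k=1..K. if k = kstar then ln (1 / ps) else 0)) at_top"
    by (intro tendsto_sum limterm)
  moreover have "(\<Sum>k=1..K. if k = kstar then ln (1 / ps) else 0) = ln (1 / ps)" using ks by simp
  ultimately show ?thesis unfolding kl_div_def ps_def by simp
qed

lemma alpha_good:
  assumes "K \<ge> 2" and "inS K \<zeta> p" and "inS K \<zeta> q" and "0 < \<zeta>"
    and "kstar \<in> {1..K}" and "\<forall>k\<in>{1..K}. q k \<le> q kstar"
    and "0 \<le> \<delta>" and "\<delta> < ln (1 / p kstar)"
  shows "alpha_of K q p \<delta> \<ge> 0 \<and> kl_div {1..K} (tilt K q p (alpha_of K q p \<delta>)) p = \<delta>"
proof -
  have K1: "K \<ge> 1" using assms(1) by simp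
  have pp: "\<forall>k\<in>{1..K}. p k > 0"
  proof
    fix k assume "k \<in> {1..K}"
    hence "p k > \<zeta>" using assms(2) unfolding inS_def by blast
    thus "p k > 0" using assms(4) by linarith
  qed
  have qp: "\<forall>k\<in>{1..K}. q k > 0"
  proof
    fix k assume "k \<in> {1..K}"
    hence "q k > \<zeta>" using assms(3) unfolding inS_def by blast
    thus "q k > 0" using assms(4) by linarith
  qed
  have qinj: "\<forall>k\<in>{1..K}. \<forall>k'\<in>{1..K}. k \<noteq> k' \<longrightarrow> q k \<noteq> q k'"
    using assms(3) unfolding inS_def by blast
  have qd: "q 1 \<noteq> q 2"
  proof -
    have "(1::nat) \<in> {1..K}" "(2::nat) \<in> {1..K}" using assms(1) by auto
    thus ?thesis using qinj by force
  qed
  have qmax: "\<forall>k\<in>{1..K}. k \<noteq> kstar \<longrightarrow> q k < q kstar"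
  proof (intro ballI impI)
    fix k assume k: "k \<in> {1..K}" "k \<noteq> kstar"
    have "q k \<le> q kstar" using assms(6) k by blast
    moreover have "q k \<noteq> q kstar" using qinj k assms(5) by blast
    ultimately show "q k < q kstar" by simp
  qed
  have psum: "(\<Sum>k=1..K. p k) = 1" using assms(2) unfolding inS_def by blast
  define D where "D \<alpha> = kl_div {1..K} (tilt K q p \<alpha>) p" for \<alpha>
  have D0: "D 0 = 0"
  proof -
    have "Zt K q p 0 = (\<Sum>k=1..K. p k)" unfolding Zt_def
    proof (rule sum.cong)
      fix k assume "k \<in> {1..K}"
      hence "q k > 0" using qp by blast
      thus "p k * q k powr 0 = p k" by simp
    qed simp
    thus ?thesis unfolding D_def D_formula[OF pp qp K1] using psum by simp
  qed
  have lim: "(D \<longlongrightarrow> ln (1 / p kstar)) at_top"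
    unfolding D_def[abs_def] by (rule D_lim[OF pp qp K1 assms(5) qmax])
  have "eventually (\<lambda>\<alpha>. \<delta> < D \<alpha>) at_top" by (rule order_tendstoD(1)[OF lim assms(8)])
  then obtain N where N: "\<And>\<alpha>. \<alpha> \<ge> N \<Longrightarrow> \<delta> < D \<alpha>" by (auto simp: eventually_at_top_linorder)
  define a1 where "a1 = max N 0"
  have a1: "\<delta> < D a1" "0 \<le> a1" using N[of a1] unfolding a1_def by auto
  have cont: "continuous_on {0..a1} D"
    using continuous_on_subset[OF D_cont[OF pp qp K1]] unfolding D_def[abs_def] by blast
  obtain a where a: "0 \<le> a" "a \<le> a1" "D a = \<delta>"
    using IVT'[of D 0 \<delta> a1, OF _ _ a1(2) cont] D0 assms(7) a1(1) by auto
  have uniq: "\<And>b. 0 \<le> b \<and> D b = \<delta> \<Longrightarrow> b = a"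
  proof -
    fix b assume b: "0 \<le> b \<and> D b = \<delta>"
    show "b = a"
    proof (rule ccontr)
      assume "b \<noteq> a"
      hence "b < a \<or> a < b" by linarith
      thus False
      proof
        assume "b < a"
        hence "D b < D a" unfolding D_def using D_strict_mono[OF pp qp assms(1) qd] b by blast
        thus False using a b by simp
      next
        assume "a < b"
        hence "D a < D b" unfolding D_def using D_strict_mono[OF pp qp assms(1) qd] a by blast
        thus False using a b by simp
      qed
    qed
  qed
  have ex1: "\<exists>!\<alpha>. \<alpha> \<ge> 0 \<and> kl_div {1..K} (tilt K q p \<alpha>) p = \<delta>"
    using a uniq unfolding D_def by blast
  show ?thesis unfolding alpha_of_def by (rule theI'[OF ex1])
qed



lemma seqs_mem: "y \<in> seqs K m \<Longrightarrow> i < m \<Longrightarrow> y i \<in> {1..K}"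
  unfolding seqs_def by (auto simp: PiE_iff)

lemma pd_pos: "\<forall>k\<in>{1..K}. f k > 0 \<Longrightarrow> y \<in> seqs K m \<Longrightarrow> prod_dist m f y > 0"
  unfolding prod_dist_def by (rule prod_pos) (use seqs_mem in blast)

lemma pd_ln: "\<forall>k\<in>{1..K}. f k > 0 \<Longrightarrow> y \<in> seqs K m \<Longrightarrow> ln (prod_dist m f y) = (\<Sum>i<m. ln (f (y i)))"
  unfolding prod_dist_def by (rule ln_prod) (use seqs_mem in force)+

lemma pd_div: "prod_dist m f y / prod_dist m g y = prod_dist m (\<lambda>k. f k / g k) y"
  unfolding prod_dist_def by (simp add: prod_dividef)

theorem mainTheorem3:
  fixes K m kstar :: nat and \<zeta> \<delta> :: real and p q :: "nat \<Rightarrow> real"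
  assumes "K \<ge> 2" and "0 < \<zeta>" and "\<zeta> < 1 / real K"
    and "inS K \<zeta> p" and "inS K \<zeta> q"
    and "kstar \<in> {1..K}" and "\<forall>k\<in>{1..K}. q k \<le> q kstar"
    and "m \<ge> 1"
    and "0 \<le> \<delta>" and "\<delta> < ln (1 / p kstar)"
  shows "is_pmf_on (seqs K m) (prod_dist m (phi K q p \<delta>))
    \<and> kl_div (seqs K m) (prod_dist m (phi K q p \<delta>)) (prod_dist m p) \<le> real m * \<delta>
    \<and> (\<forall>\<Phi>. is_pmf_on (seqs K m) \<Phi> \<and> kl_div (seqs K m) \<Phi> (prod_dist m p) \<le> real m * \<delta>
          \<longrightarrow> cross_ent (seqs K m) (prod_dist m (phi K q p \<delta>)) (prod_dist m q)
              \<le> cross_ent (seqs K m) \<Phi> (prod_dist m q))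
    \<and> (\<forall>\<Phi>. is_pmf_on (seqs K m) \<Phi> \<and> kl_div (seqs K m) \<Phi> (prod_dist m p) \<le> real m * \<delta>
          \<and> cross_ent (seqs K m) \<Phi> (prod_dist m q)
            = cross_ent (seqs K m) (prod_dist m (phi K q p \<delta>)) (prod_dist m q)
          \<longrightarrow> (\<forall>y\<in>seqs K m. \<Phi> y = prod_dist m (phi K q p \<delta>) y))"
proof -
  define S where "S = seqs K m"
  define \<alpha> where "\<alpha> = alpha_of K q p \<delta>"
  define \<phi> where "\<phi> = tilt K q p \<alpha>"
  define Z where "Z = Zt K q p \<alpha>"
  define \<Psi> where "\<Psi> = prod_dist m \<phi>"
  define P where "P = prod_dist m p"
  define Q where "Q = prod_dist m q"
  define g where "g y = (\<Sum>i<m. ln (q (y i)))" for y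
  have phiq: "phi K q p \<delta> = \<phi>" unfolding phi_def \<phi>_def \<alpha>_def ..
  have K1: "K \<ge> 1" using assms(1) by simp
  have pp: "\<forall>k\<in>{1..K}. p k > 0"
  proof
    fix k assume "k \<in> {1..K}"
    hence "p k > \<zeta>" using assms(4) unfolding inS_def by blast
    thus "p k > 0" using assms(2) by linarith
  qed
  have qp: "\<forall>k\<in>{1..K}. q k > 0"
  proof
    fix k assume "k \<in> {1..K}"
    hence "q k > \<zeta>" using assms(5) unfolding inS_def by blast
    thus "q k > 0" using assms(2) by linarith
  qed
  have ag: "\<alpha> \<ge> 0" "kl_div {1..K} \<phi> p = \<delta>"
    using alpha_good[OF assms(1,4,5,2,6,7,9,10)] unfolding \<alpha>_def \<phi>_def by auto
  note tp = tilt_props[OF pp qp K1, of \<alpha>, folded \<phi>_def Z_def]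
  have fin: "finite S" unfolding S_def by (rule seqs_finite)
  have Psipos: "\<And>y. y \<in> S \<Longrightarrow> \<Psi> y > 0" unfolding \<Psi>_def S_def using tp(2) pd_pos by blast
  have Ppos: "\<And>y. y \<in> S \<Longrightarrow> P y > 0" unfolding P_def S_def using pp pd_pos by blast
  have Qpos: "\<And>y. y \<in> S \<Longrightarrow> Q y > 0" unfolding Q_def S_def using qp pd_pos by blast
  have Psisum: "sum \<Psi> S = 1" unfolding \<Psi>_def S_def prod_dist_total using tp(3) by simp
  have lnQ: "\<And>y. y \<in> S \<Longrightarrow> ln (1 / Q y) = - g y"
  proof -
    fix y assume y: "y \<in> S"
    have "ln (1 / Q y) = - ln (Q y)" using Qpos[OF y] by (simp add: ln_div)
    thus "ln (1 / Q y) = - g y" unfolding Q_def g_def using pd_ln[OF qp] y S_def by simp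
  qed
  have lnPP: "\<And>y. y \<in> S \<Longrightarrow> ln (\<Psi> y / P y) = (\<Sum>i<m. ln (\<phi> (y i) / p (y i)))"
  proof -
    fix y assume y: "y \<in> S"
    have pos: "\<forall>k\<in>{1..K}. \<phi> k / p k > 0" using tp(2) pp by auto
    show "ln (\<Psi> y / P y) = (\<Sum>i<m. ln (\<phi> (y i) / p (y i)))"
      unfolding \<Psi>_def P_def pd_div using pd_ln[OF pos] y S_def by simp
  qed
  have lnPP2: "\<And>y. y \<in> S \<Longrightarrow> ln (\<Psi> y / P y) = \<alpha> * g y - real m * ln Z"
  proof -
    fix y assume y: "y \<in> S"
    have "(\<Sum>i<m. ln (\<phi> (y i) / p (y i))) = (\<Sum>i<m. \<alpha> * ln (q (y i)) - ln Z)"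
    proof (rule sum.cong)
      fix i assume "i \<in> {..<m}"
      hence "y i \<in> {1..K}" using seqs_mem y S_def by blast
      thus "ln (\<phi> (y i) / p (y i)) = \<alpha> * ln (q (y i)) - ln Z" using tp(4) by blast
    qed simp
    also have "\<dots> = \<alpha> * g y - real m * ln Z" unfolding g_def
      by (simp add: sum_subtractf sum_distrib_left)
    finally show "ln (\<Psi> y / P y) = \<alpha> * g y - real m * ln Z" using lnPP[OF y] by simp
  qed
  have klPsi: "kl_div S \<Psi> P = real m * \<delta>"
  proof -
    have "kl_div S \<Psi> P = (\<Sum>y\<in>S. \<Psi> y * (\<Sum>i<m. ln (\<phi> (y i) / p (y i))))"
      unfolding kl_div_def using lnPP by (intro sum.cong) auto
    also have "\<dots> = real m * (\<Sum>k=1..K. \<phi> k * ln (\<phi> k / p k))"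
      unfolding \<Psi>_def S_def by (rule prod_dist_lin) (rule tp(3))
    finally show ?thesis using ag(2) unfolding kl_div_def by simp
  qed
  have crossE: "\<And>\<Phi>. cross_ent S \<Phi> Q = - (\<Sum>y\<in>S. \<Phi> y * g y)"
  proof -
    fix \<Phi> :: "(nat \<Rightarrow> nat) \<Rightarrow> real"
    have "cross_ent S \<Phi> Q = (\<Sum>y\<in>S. - (\<Phi> y * g y))"
      unfolding cross_ent_def using lnQ by (intro sum.cong) auto
    thus "cross_ent S \<Phi> Q = - (\<Sum>y\<in>S. \<Phi> y * g y)" by (simp add: sum_negf)
  qed
  have decomp: "\<And>\<Phi>. is_pmf_on S \<Phi> \<Longrightarrow>
      kl_div S \<Phi> P = kl_div S \<Phi> \<Psi> + \<alpha> * (\<Sum>y\<in>S. \<Phi> y * g y) - real m * ln Z"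
  proof -
    fix \<Phi> :: "(nat \<Rightarrow> nat) \<Rightarrow> real" assume pmf: "is_pmf_on S \<Phi>"
    have t: "\<And>y. y \<in> S \<Longrightarrow> \<Phi> y * ln (\<Phi> y / P y)
        = \<Phi> y * ln (\<Phi> y / \<Psi> y) + (\<alpha> * (\<Phi> y * g y) - real m * ln Z * \<Phi> y)"
    proof -
      fix y assume y: "y \<in> S"
      show "\<Phi> y * ln (\<Phi> y / P y)
        = \<Phi> y * ln (\<Phi> y / \<Psi> y) + (\<alpha> * (\<Phi> y * g y) - real m * ln Z * \<Phi> y)"
      proof (cases "\<Phi> y = 0")
        case True thus ?thesis by simp
      next
        case False
        hence Fp: "\<Phi> y > 0" using pmf y unfolding is_pmf_on_def by force
        have "\<Phi> y / P y = (\<Phi> y / \<Psi> y) * (\<Psi> y / P y)" using Psipos[OF y] by simp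
        hence "ln (\<Phi> y / P y) = ln ((\<Phi> y / \<Psi> y) * (\<Psi> y / P y))" by (rule arg_cong)
        also have "\<dots> = ln (\<Phi> y / \<Psi> y) + ln (\<Psi> y / P y)"
          using Fp Psipos[OF y] Ppos[OF y] by (intro ln_mult_pos) auto
        finally have "ln (\<Phi> y / P y) = ln (\<Phi> y / \<Psi> y) + ln (\<Psi> y / P y)" .
        hence "ln (\<Phi> y / P y) = ln (\<Phi> y / \<Psi> y) + (\<alpha> * g y - real m * ln Z)"
          using lnPP2[OF y] by simp
        hence "\<Phi> y * ln (\<Phi> y / P y) = \<Phi> y * ln (\<Phi> y / \<Psi> y) + \<Phi> y * (\<alpha> * g y - real m * ln Z)"
          by (simp add: distrib_left)
        thus ?thesis by (simp add: algebra_simps)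
      qed
    qed
    have "kl_div S \<Phi> P = (\<Sum>y\<in>S. \<Phi> y * ln (\<Phi> y / \<Psi> y) + (\<alpha> * (\<Phi> y * g y) - real m * ln Z * \<Phi> y))"
      unfolding kl_div_def using t by (rule sum.cong[OF refl])
    also have "\<dots> = kl_div S \<Phi> \<Psi> + (\<alpha> * (\<Sum>y\<in>S. \<Phi> y * g y) - real m * ln Z * (\<Sum>y\<in>S. \<Phi> y))"
      unfolding kl_div_def by (simp add: sum.distrib sum_subtractf sum_distrib_left)
    finally show "kl_div S \<Phi> P = kl_div S \<Phi> \<Psi> + \<alpha> * (\<Sum>y\<in>S. \<Phi> y * g y) - real m * ln Z"
      using pmf unfolding is_pmf_on_def by simp
  qed
  have Psipmf: "is_pmf_on S \<Psi>" unfolding is_pmf_on_def using Psipos Psisum by (auto simp: less_imp_le)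
  have klself: "kl_div S \<Psi> \<Psi> = 0" unfolding kl_div_def using Psipos by (intro sum.neutral) simp
  have key: "\<And>\<Phi>. is_pmf_on S \<Phi> \<Longrightarrow> kl_div S \<Phi> P \<le> real m * \<delta> \<Longrightarrow>
      0 \<le> kl_div S \<Phi> \<Psi> \<and> kl_div S \<Phi> \<Psi> \<le> \<alpha> * (cross_ent S \<Phi> Q - cross_ent S \<Psi> Q)"
  proof -
    fix \<Phi> assume pmf: "is_pmf_on S \<Phi>" and le: "kl_div S \<Phi> P \<le> real m * \<delta>"
    have "0 \<le> kl_div S \<Phi> \<Psi>"
      by (rule gibbs(1)) (use pmf Psipos Psisum fin in \<open>auto simp: is_pmf_on_def\<close>)
    moreover have "kl_div S \<Phi> \<Psi> \<le> \<alpha> * (cross_ent S \<Phi> Q - cross_ent S \<Psi> Q)"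
      using decomp[OF pmf] decomp[OF Psipmf] klself klPsi le crossE[of \<Phi>] crossE[of \<Psi>]
      by (simp add: algebra_simps)
    ultimately show "0 \<le> kl_div S \<Phi> \<Psi> \<and> kl_div S \<Phi> \<Psi> \<le> \<alpha> * (cross_ent S \<Phi> Q - cross_ent S \<Psi> Q)" by simp
  qed
  have eqP: "\<And>\<Phi>. is_pmf_on S \<Phi> \<Longrightarrow> kl_div S \<Phi> \<Psi> \<le> 0 \<Longrightarrow> \<forall>y\<in>S. \<Phi> y = \<Psi> y"
    by (rule gibbs(2)) (use Psipos Psisum fin in \<open>auto simp: is_pmf_on_def\<close>)
  have c3: "\<forall>\<Phi>. is_pmf_on S \<Phi> \<and> kl_div S \<Phi> P \<le> real m * \<delta>
          \<longrightarrow> cross_ent S \<Psi> Q \<le> cross_ent S \<Phi> Q"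
  proof (intro allI impI)
    fix \<Phi> assume h: "is_pmf_on S \<Phi> \<and> kl_div S \<Phi> P \<le> real m * \<delta>"
    note k = key[OF h[THEN conjunct1] h[THEN conjunct2]]
    show "cross_ent S \<Psi> Q \<le> cross_ent S \<Phi> Q"
    proof (cases "\<alpha> = 0")
      case True
      hence "\<forall>y\<in>S. \<Phi> y = \<Psi> y" using eqP h k by simp
      hence "cross_ent S \<Phi> Q = cross_ent S \<Psi> Q" unfolding cross_ent_def by simp
      thus ?thesis by simp
    next
      case False
      hence "\<alpha> > 0" using ag(1) by simp
      moreover have "0 \<le> \<alpha> * (cross_ent S \<Phi> Q - cross_ent S \<Psi> Q)" using k by linarith
      ultimately show ?thesis by (simp add: zero_le_mult_iff)
    qed
  qed
  have c4: "\<forall>\<Phi>. is_pmf_on S \<Phi> \<and> kl_div S \<Phi> P \<le> real m * \<delta> \<and> cross_ent S \<Phi> Q = cross_ent S \<Psi> Q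
          \<longrightarrow> (\<forall>y\<in>S. \<Phi> y = \<Psi> y)"
  proof (intro allI impI)
    fix \<Phi> assume h: "is_pmf_on S \<Phi> \<and> kl_div S \<Phi> P \<le> real m * \<delta> \<and> cross_ent S \<Phi> Q = cross_ent S \<Psi> Q"
    hence "kl_div S \<Phi> \<Psi> \<le> 0" using key[of \<Phi>] by simp
    thus "\<forall>y\<in>S. \<Phi> y = \<Psi> y" using eqP h by blast
  qed
  show ?thesis unfolding phiq using Psipmf klPsi c3 c4
    unfolding S_def[symmetric] \<Psi>_def[symmetric] P_def[symmetric] Q_def[symmetric] by simp
qed

end
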